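(* Let $\mathcal{C}$ be a category and $A$ an object of $\mathcal{C}$ satisfying the axioms RC0, RC1, RC2 below, and let $G=\mathrm{Aut}(A)^{op}$. Then for every object $X$ the set $[A,X]$ with the left $G$-action $g\cdot x=x\circ g$ is a transitive $G$-set, giving a functor $[A,-]_G\colon\mathcal{C}\to t\mathcal{E}ns^G$. This functor has a left adjoint $A\times_G(-)$, given on a transitive $G$-set $E$ by $A\times_G E=A/H$ where $H=\mathrm{Fix}(x_0)=\{g: g\cdot x_0=x_0\}$ for any chosen $x_0\in E$; the unit $E\cong[A,A]/H\to[A,A/H]$ and the counit $A/\mathrm{Fix}(x)\to X$ (for $x\in[A,X]$) are isomorphisms. Hence $[A,-]_G$ and $A\times_G(-)$ establish an equivalence of categories $\mathcal{C}\simeq t\mathcal{E}ns^G$.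
   Context: $t\mathcal{E}ns^G$ denotes the category of transitive (left) $G$-sets with equivariant maps. An arrow $f\colon X\to Y$ is a strict epimorphism if for every arrow $g\colon X\to Z$ compatible with $f$ (for every object $C$ and all $u,v\colon C\to X$ with $f\circ u=f\circ v$ one has $g\circ u=g\circ v$) there is a unique $k\colon Y\to Z$ with $g=k\circ f$. For a group $H$ acting on $A$ by automorphisms (a homomorphism $H\to\mathrm{Aut}(A)^{op}$), the quotient $q\colon A\to A/H$ is an arrow with $q\circ h=q$ for all $h\in H$, universal among such arrows. Axioms: RC0: for every object $X$ there exists an arrow $A\to X$, and every arrow $A\to X$ is a strict epimorphism. RC1: for every subgroup $H\subseteq\mathrm{Aut}(A)$ the quotient $q\colon A\to A/H$ exists and the map $[A,A]\to[A,A/H]$, $f\mapsto q\circ f$, is surjective with $q\circ f=q\circ g$ iff $f=h\circ g$ for some $h\in H$. RC2: $[A,A]=\mathrm{Aut}(A)$. *)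

theory Defs
  imports "HOL-Library.FuncSet"
begin

text \<open>A category is given by hom-sets Hom X Y (arrows of type 'a between objects of
  type 'o), composition cmp g f (= g \<circ> f, first f then g) and identities idt X.\<close>

definition category :: "('o \<Rightarrow> 'o \<Rightarrow> 'a set) \<Rightarrow> ('a \<Rightarrow> 'a \<Rightarrow> 'a) \<Rightarrow> ('o \<Rightarrow> 'a) \<Rightarrow> bool" where
  "category Hom cmp idt \<longleftrightarrow>
     (\<forall>X. idt X \<in> Hom X X) \<and>
     (\<forall>X Y Z f g. f \<in> Hom X Y \<longrightarrow> g \<in> Hom Y Z \<longrightarrow> cmp g f \<in> Hom X Z) \<and>
     (\<forall>X Y f. f \<in> Hom X Y \<longrightarrow> cmp (idt Y) f = f \<and> cmp f (idt X) = f) \<and>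
     (\<forall>W X Y Z f g h. f \<in> Hom W X \<longrightarrow> g \<in> Hom X Y \<longrightarrow> h \<in> Hom Y Z \<longrightarrow>
        cmp h (cmp g f) = cmp (cmp h g) f) \<and>
     (\<forall>X Y X' Y' f. f \<in> Hom X Y \<longrightarrow> f \<in> Hom X' Y' \<longrightarrow> X = X' \<and> Y = Y')"

definition is_iso :: "('o \<Rightarrow> 'o \<Rightarrow> 'a set) \<Rightarrow> ('a \<Rightarrow> 'a \<Rightarrow> 'a) \<Rightarrow> ('o \<Rightarrow> 'a) \<Rightarrow> 'o \<Rightarrow> 'o \<Rightarrow> 'a \<Rightarrow> bool" where
  "is_iso Hom cmp idt X Y f \<longleftrightarrow> f \<in> Hom X Y \<and>
     (\<exists>g \<in> Hom Y X. cmp g f = idt X \<and> cmp f g = idt Y)"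

definition Aut :: "('o \<Rightarrow> 'o \<Rightarrow> 'a set) \<Rightarrow> ('a \<Rightarrow> 'a \<Rightarrow> 'a) \<Rightarrow> ('o \<Rightarrow> 'a) \<Rightarrow> 'o \<Rightarrow> 'a set" where
  "Aut Hom cmp idt A = {g. is_iso Hom cmp idt A A g}"

definition strict_epi :: "('o \<Rightarrow> 'o \<Rightarrow> 'a set) \<Rightarrow> ('a \<Rightarrow> 'a \<Rightarrow> 'a) \<Rightarrow> 'o \<Rightarrow> 'o \<Rightarrow> 'a \<Rightarrow> bool" where
  "strict_epi Hom cmp X Y f \<longleftrightarrow> f \<in> Hom X Y \<and>
     (\<forall>Z g. g \<in> Hom X Z \<longrightarrow>
        (\<forall>C u v. u \<in> Hom C X \<longrightarrow> v \<in> Hom C X \<longrightarrow> cmp f u = cmp f v \<longrightarrow> cmp g u = cmp g v) \<longrightarrow>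
        (\<exists>!k. k \<in> Hom Y Z \<and> g = cmp k f))"

definition aut_subgroup :: "('o \<Rightarrow> 'o \<Rightarrow> 'a set) \<Rightarrow> ('a \<Rightarrow> 'a \<Rightarrow> 'a) \<Rightarrow> ('o \<Rightarrow> 'a) \<Rightarrow> 'o \<Rightarrow> 'a set \<Rightarrow> bool" where
  "aut_subgroup Hom cmp idt A H \<longleftrightarrow> H \<subseteq> Aut Hom cmp idt A \<and> idt A \<in> H \<and>
     (\<forall>g\<in>H. \<forall>h\<in>H. cmp g h \<in> H) \<and>
     (\<forall>g\<in>H. \<exists>h\<in>H. cmp h g = idt A \<and> cmp g h = idt A)"

definition is_quotient :: "('o \<Rightarrow> 'o \<Rightarrow> 'a set) \<Rightarrow> ('a \<Rightarrow> 'a \<Rightarrow> 'a) \<Rightarrow> 'o \<Rightarrow> 'a set \<Rightarrow> 'a \<Rightarrow> 'o \<Rightarrow> bool" where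
  "is_quotient Hom cmp A H q Q \<longleftrightarrow> q \<in> Hom A Q \<and> (\<forall>h\<in>H. cmp q h = q) \<and>
     (\<forall>Z g. g \<in> Hom A Z \<longrightarrow> (\<forall>h\<in>H. cmp g h = g) \<longrightarrow> (\<exists>!k. k \<in> Hom Q Z \<and> g = cmp k q))"

definition RC0 :: "('o \<Rightarrow> 'o \<Rightarrow> 'a set) \<Rightarrow> ('a \<Rightarrow> 'a \<Rightarrow> 'a) \<Rightarrow> 'o \<Rightarrow> bool" where
  "RC0 Hom cmp A \<longleftrightarrow> (\<forall>X. Hom A X \<noteq> {} \<and> (\<forall>f \<in> Hom A X. strict_epi Hom cmp A X f))"

definition RC1 :: "('o \<Rightarrow> 'o \<Rightarrow> 'a set) \<Rightarrow> ('a \<Rightarrow> 'a \<Rightarrow> 'a) \<Rightarrow> ('o \<Rightarrow> 'a) \<Rightarrow> 'o \<Rightarrow> bool" where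
  "RC1 Hom cmp idt A \<longleftrightarrow> (\<forall>H. aut_subgroup Hom cmp idt A H \<longrightarrow>
     (\<exists>q Q. is_quotient Hom cmp A H q Q \<and>
        (\<forall>f' \<in> Hom A Q. \<exists>f \<in> Hom A A. f' = cmp q f) \<and>
        (\<forall>f \<in> Hom A A. \<forall>g \<in> Hom A A. cmp q f = cmp q g \<longleftrightarrow> (\<exists>h\<in>H. f = cmp h g))))"

definition RC2 :: "('o \<Rightarrow> 'o \<Rightarrow> 'a set) \<Rightarrow> ('a \<Rightarrow> 'a \<Rightarrow> 'a) \<Rightarrow> ('o \<Rightarrow> 'a) \<Rightarrow> 'o \<Rightarrow> bool" where
  "RC2 Hom cmp idt A \<longleftrightarrow> Hom A A = Aut Hom cmp idt A"

text \<open>G = Aut(A)^op: the product g \<cdot> h in G is cmp h g.  A (left) G-set is a carrier E with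
  act g (act h x) = act (g \<cdot> h) x = act (cmp h g) x.  Transitive G-sets are nonempty.\<close>
definition tgset :: "('o \<Rightarrow> 'o \<Rightarrow> 'a set) \<Rightarrow> ('a \<Rightarrow> 'a \<Rightarrow> 'a) \<Rightarrow> ('o \<Rightarrow> 'a) \<Rightarrow> 'o \<Rightarrow>
    'e set \<Rightarrow> ('a \<Rightarrow> 'e \<Rightarrow> 'e) \<Rightarrow> bool" where
  "tgset Hom cmp idt A E act \<longleftrightarrow>
     (\<forall>g \<in> Aut Hom cmp idt A. \<forall>x\<in>E. act g x \<in> E) \<and>
     (\<forall>x\<in>E. act (idt A) x = x) \<and>
     (\<forall>g \<in> Aut Hom cmp idt A. \<forall>h \<in> Aut Hom cmp idt A. \<forall>x\<in>E. act g (act h x) = act (cmp h g) x) \<and>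
     E \<noteq> {} \<and>
     (\<forall>x\<in>E. \<forall>y\<in>E. \<exists>g \<in> Aut Hom cmp idt A. act g x = y)"

definition gmaps :: "('o \<Rightarrow> 'o \<Rightarrow> 'a set) \<Rightarrow> ('a \<Rightarrow> 'a \<Rightarrow> 'a) \<Rightarrow> ('o \<Rightarrow> 'a) \<Rightarrow> 'o \<Rightarrow>
    'e set \<Rightarrow> ('a \<Rightarrow> 'e \<Rightarrow> 'e) \<Rightarrow> 'f set \<Rightarrow> ('a \<Rightarrow> 'f \<Rightarrow> 'f) \<Rightarrow> ('e \<Rightarrow> 'f) set" where
  "gmaps Hom cmp idt A E act F act' =
     {\<phi> \<in> extensional E. \<phi> \<in> E \<rightarrow> F \<and>
        (\<forall>g \<in> Aut Hom cmp idt A. \<forall>x\<in>E. \<phi> (act g x) = act' g (\<phi> x))}"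

definition giso :: "('o \<Rightarrow> 'o \<Rightarrow> 'a set) \<Rightarrow> ('a \<Rightarrow> 'a \<Rightarrow> 'a) \<Rightarrow> ('o \<Rightarrow> 'a) \<Rightarrow> 'o \<Rightarrow>
    'e set \<Rightarrow> ('a \<Rightarrow> 'e \<Rightarrow> 'e) \<Rightarrow> 'f set \<Rightarrow> ('a \<Rightarrow> 'f \<Rightarrow> 'f) \<Rightarrow> ('e \<Rightarrow> 'f) \<Rightarrow> bool" where
  "giso Hom cmp idt A E act F act' \<phi> \<longleftrightarrow>
     \<phi> \<in> gmaps Hom cmp idt A E act F act' \<and> bij_betw \<phi> E F"

definition hact :: "('a \<Rightarrow> 'a \<Rightarrow> 'a) \<Rightarrow> 'a \<Rightarrow> 'a \<Rightarrow> 'a" where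
  "hact cmp g x = cmp x g"

definition Fix :: "('o \<Rightarrow> 'o \<Rightarrow> 'a set) \<Rightarrow> ('a \<Rightarrow> 'a \<Rightarrow> 'a) \<Rightarrow> ('o \<Rightarrow> 'a) \<Rightarrow> 'o \<Rightarrow>
    ('a \<Rightarrow> 'e \<Rightarrow> 'e) \<Rightarrow> 'e \<Rightarrow> 'a set" where
  "Fix Hom cmp idt A act x0 = {g \<in> Aut Hom cmp idt A. act g x0 = x0}"

end

theory Submission imports Defs begin

locale rcl =
  fixes Hom :: "'o \<Rightarrow> 'o \<Rightarrow> 'a set" and cmp :: "'a \<Rightarrow> 'a \<Rightarrow> 'a" and idt :: "'o \<Rightarrow> 'a"
    and A :: 'o
  assumes cat: "category Hom cmp idt"
    and rc0: "RC0 Hom cmp A"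
    and rc1: "RC1 Hom cmp idt A"
    and rc2: "RC2 Hom cmp idt A"
begin

lemma comp: "f \<in> Hom X Y \<Longrightarrow> g \<in> Hom Y Z \<Longrightarrow> cmp g f \<in> Hom X Z"
  using cat unfolding category_def by blast
lemma idH: "idt X \<in> Hom X X"
  using cat unfolding category_def by simp
lemma idl: "f \<in> Hom X Y \<Longrightarrow> cmp (idt Y) f = f"
  using cat unfolding category_def by blast
lemma idr: "f \<in> Hom X Y \<Longrightarrow> cmp f (idt X) = f"
  using cat unfolding category_def by blast
lemma assoc: "f \<in> Hom W X \<Longrightarrow> g \<in> Hom X Y \<Longrightarrow> h \<in> Hom Y Z \<Longrightarrow> cmp h (cmp g f) = cmp (cmp h g) f"
  using cat unfolding category_def by blast
lemma homA_ne: "\<exists>a. a \<in> Hom A X"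
  using rc0 unfolding RC0_def by blast
lemma sepi: "f \<in> Hom A X \<Longrightarrow> strict_epi Hom cmp A X f"
  using rc0 unfolding RC0_def by blast

lemma epi:
  assumes f: "f \<in> Hom A X" and k1: "k1 \<in> Hom X Z" and k2: "k2 \<in> Hom X Z" and e: "cmp k1 f = cmp k2 f"
  shows "k1 = k2"
proof -
  have g: "cmp k1 f \<in> Hom A Z" using comp f k1 by blast
  have compat: "\<forall>C u v. u \<in> Hom C A \<longrightarrow> v \<in> Hom C A \<longrightarrow> cmp f u = cmp f v \<longrightarrow> cmp (cmp k1 f) u = cmp (cmp k1 f) v"
    using assoc f k1 by metis
  have "\<exists>!k. k \<in> Hom X Z \<and> cmp k1 f = cmp k f"
    using sepi[OF f] g compat unfolding strict_epi_def by blast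
  then show ?thesis using k1 k2 e by blast
qed

lemma AutH: "Aut Hom cmp idt A = Hom A A"
  using rc2 unfolding RC2_def by simp

lemma inv: "g \<in> Hom A A \<Longrightarrow> \<exists>h\<in>Hom A A. cmp h g = idt A \<and> cmp g h = idt A"
  using rc2 unfolding RC2_def Aut_def is_iso_def by blast

lemma factor:
  assumes f: "f \<in> Hom A X" and g: "g \<in> Hom A Z"
    and c: "\<And>\<alpha> \<beta>. \<alpha> \<in> Hom A A \<Longrightarrow> \<beta> \<in> Hom A A \<Longrightarrow> cmp f \<alpha> = cmp f \<beta> \<Longrightarrow> cmp g \<alpha> = cmp g \<beta>"
  shows "\<exists>k\<in>Hom X Z. g = cmp k f"
proof -
  have compat: "cmp g u = cmp g v" if u: "u \<in> Hom C A" and v: "v \<in> Hom C A" and e: "cmp f u = cmp f v" for C u v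
  proof -
    obtain a where a: "a \<in> Hom A C" using homA_ne by blast
    have ua: "cmp u a \<in> Hom A A" and va: "cmp v a \<in> Hom A A" using comp a u v by blast+
    have "cmp f (cmp u a) = cmp f (cmp v a)" using assoc[OF a u f] assoc[OF a v f] e by simp
    then have "cmp g (cmp u a) = cmp g (cmp v a)" using c ua va by blast
    then have "cmp (cmp g u) a = cmp (cmp g v) a" using assoc[OF a u g] assoc[OF a v g] by simp
    then show ?thesis using epi[OF a] comp[OF u g] comp[OF v g] by blast
  qed
  have "\<exists>!k. k \<in> Hom X Z \<and> g = cmp k f"
    using sepi[OF f] g compat unfolding strict_epi_def by blast
  then show ?thesis by blast
qed

lemma fix_sub:
  assumes i: "act (idt A) x0 = x0"
    and m: "\<And>g h. g \<in> Hom A A \<Longrightarrow> h \<in> Hom A A \<Longrightarrow> act g (act h x0) = act (cmp h g) x0"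
  shows "aut_subgroup Hom cmp idt A (Fix Hom cmp idt A act x0)"
  unfolding aut_subgroup_def
proof (intro conjI ballI)
  show "Fix Hom cmp idt A act x0 \<subseteq> Aut Hom cmp idt A" unfolding Fix_def by blast
  show "idt A \<in> Fix Hom cmp idt A act x0" unfolding Fix_def AutH using idH i by blast
next
  fix g h assume g: "g \<in> Fix Hom cmp idt A act x0" and h: "h \<in> Fix Hom cmp idt A act x0"
  then have gA: "g \<in> Hom A A" "act g x0 = x0" and hA: "h \<in> Hom A A" "act h x0 = x0"
    unfolding Fix_def AutH by auto
  have "act (cmp g h) x0 = act h (act g x0)" using m[OF hA(1) gA(1)] by simp
  then show "cmp g h \<in> Fix Hom cmp idt A act x0"
    unfolding Fix_def AutH using gA hA comp by auto
next
  fix g assume g: "g \<in> Fix Hom cmp idt A act x0"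
  then have gA: "g \<in> Hom A A" "act g x0 = x0" unfolding Fix_def AutH by auto
  obtain h where h: "h \<in> Hom A A" "cmp h g = idt A" "cmp g h = idt A" using inv[OF gA(1)] by blast
  have "act h x0 = act h (act g x0)" using gA by simp
  also have "\<dots> = act (cmp g h) x0" using m h gA by blast
  also have "\<dots> = x0" using h i by simp
  finally show "\<exists>h\<in>Fix Hom cmp idt A act x0. cmp h g = idt A \<and> cmp g h = idt A"
    using h unfolding Fix_def AutH by blast
qed

lemma Fix_hact: "Fix Hom cmp idt A (hact cmp) x = {g \<in> Hom A A. cmp x g = x}"
  unfolding Fix_def AutH hact_def by simp

lemma counit:
  assumes x: "x \<in> Hom A X"
    and qq: "is_quotient Hom cmp A (Fix Hom cmp idt A (hact cmp) x) q Q"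
  shows "\<exists>k. is_iso Hom cmp idt Q X k \<and> cmp k q = x"
proof -
  note qd = qq[unfolded is_quotient_def Fix_hact]
  have q: "q \<in> Hom A Q" using qd by blast
  obtain k where k: "k \<in> Hom Q X" "x = cmp k q" using qd x by blast
  have "\<exists>m\<in>Hom X Q. q = cmp m x"
  proof (rule factor[OF x q])
    fix \<alpha> \<beta> assume a: "\<alpha> \<in> Hom A A" and b: "\<beta> \<in> Hom A A" and e: "cmp x \<alpha> = cmp x \<beta>"
    obtain \<beta>' where b': "\<beta>' \<in> Hom A A" "cmp \<beta>' \<beta> = idt A" "cmp \<beta> \<beta>' = idt A" using inv[OF b] by blast
    have ab: "cmp \<alpha> \<beta>' \<in> Hom A A" using comp a b' by blast
    have "cmp x (cmp \<alpha> \<beta>') = cmp (cmp x \<alpha>) \<beta>'" using assoc[OF b'(1) a x] .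
    also have "\<dots> = cmp (cmp x \<beta>) \<beta>'" using e by simp
    also have "\<dots> = cmp x (cmp \<beta> \<beta>')" using assoc[OF b'(1) b x] by simp
    also have "\<dots> = x" using b' idr x by simp
    finally have "cmp q (cmp \<alpha> \<beta>') = q" using qd ab by blast
    moreover have "cmp (cmp \<alpha> \<beta>') \<beta> = \<alpha>" using assoc[OF b b'(1) a] b' idr a by simp
    ultimately show "cmp q \<alpha> = cmp q \<beta>" using assoc[OF b ab q] by metis
  qed
  then obtain m where m: "m \<in> Hom X Q" "q = cmp m x" by blast
  have mk: "cmp m k \<in> Hom Q Q" and km: "cmp k m \<in> Hom X X" using comp k m by blast+
  have "cmp (cmp m k) q = cmp m (cmp k q)" using assoc[OF q k(1) m(1)] by simp
  also have "\<dots> = q" using k(2) m(2) by simp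
  also have "\<dots> = cmp (idt Q) q" using idl[OF q] by simp
  finally have "cmp (cmp m k) q = cmp (idt Q) q" .
  then have 1: "cmp m k = idt Q" using epi[OF q mk idH] by blast
  have "cmp (cmp k m) x = cmp k (cmp m x)" using assoc[OF x m(1) k(1)] by simp
  also have "\<dots> = x" using k(2) m(2) by simp
  also have "\<dots> = cmp (idt X) x" using idl[OF x] by simp
  finally have "cmp (cmp k m) x = cmp (idt X) x" .
  then have 2: "cmp k m = idt X" using epi[OF x km idH] by blast
  show ?thesis unfolding is_iso_def using 1 2 k m by metis
qed


lemma hact_tg: "tgset Hom cmp idt A (Hom A X) (hact cmp)"
  unfolding tgset_def AutH
proof (intro conjI ballI)
  fix g x assume "g \<in> Hom A A" "x \<in> Hom A X"
  then show "hact cmp g x \<in> Hom A X" unfolding hact_def using comp by blast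
next
  fix x assume "x \<in> Hom A X" then show "hact cmp (idt A) x = x" unfolding hact_def using idr by blast
next
  fix g h x assume "g \<in> Hom A A" "h \<in> Hom A A" "x \<in> Hom A X"
  then show "hact cmp g (hact cmp h x) = hact cmp (cmp h g) x" unfolding hact_def using assoc by metis
next
  show "Hom A X \<noteq> {}" using homA_ne by blast
next
  fix x y assume x: "x \<in> Hom A X" and y: "y \<in> Hom A X"
  have sub: "aut_subgroup Hom cmp idt A (Fix Hom cmp idt A (hact cmp) x)"
    by (rule fix_sub) (use x in \<open>auto simp: hact_def idr assoc\<close>)
  obtain q1 Q1 where q1: "is_quotient Hom cmp A (Fix Hom cmp idt A (hact cmp) x) q1 Q1"
    and sj: "\<forall>f' \<in> Hom A Q1. \<exists>f \<in> Hom A A. f' = cmp q1 f"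
    using rc1 sub unfolding RC1_def by blast
  obtain k where k: "is_iso Hom cmp idt Q1 X k" "cmp k q1 = x" using counit[OF x q1] by blast
  obtain m where km: "k \<in> Hom Q1 X" "m \<in> Hom X Q1" "cmp m k = idt Q1" "cmp k m = idt X"
    using k(1) unfolding is_iso_def by blast
  have q1H: "q1 \<in> Hom A Q1" using q1 unfolding is_quotient_def by blast
  have "cmp m y \<in> Hom A Q1" using comp y km by blast
  then obtain f where f: "f \<in> Hom A A" "cmp m y = cmp q1 f" using sj by blast
  have "y = cmp (cmp k m) y" using km idl y by simp
  also have "\<dots> = cmp k (cmp m y)" using assoc[OF y km(2) km(1)] by simp
  also have "\<dots> = cmp k (cmp q1 f)" using f by simp
  also have "\<dots> = cmp x f" using assoc[OF f(1) q1H km(1)] k(2) by simp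
  finally show "\<exists>g\<in>Hom A A. hact cmp g x = y" using f unfolding hact_def by metis
qed

lemma trans_hom: "x \<in> Hom A X \<Longrightarrow> y \<in> Hom A X \<Longrightarrow> \<exists>g\<in>Hom A A. cmp x g = y"
  using hact_tg[of X] unfolding tgset_def AutH hact_def by blast

lemma ff: "bij_betw (\<lambda>f. \<lambda>x\<in>Hom A X. cmp f x) (Hom X Y)
                 (gmaps Hom cmp idt A (Hom A X) (hact cmp) (Hom A Y) (hact cmp))"
  unfolding bij_betw_def
proof (intro conjI)
  obtain x0 where x0: "x0 \<in> Hom A X" using homA_ne by blast
  show "inj_on (\<lambda>f. \<lambda>x\<in>Hom A X. cmp f x) (Hom X Y)"
  proof (rule inj_onI)
    fix f f' assume f: "f \<in> Hom X Y" and f': "f' \<in> Hom X Y"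
      and e: "(\<lambda>x\<in>Hom A X. cmp f x) = (\<lambda>x\<in>Hom A X. cmp f' x)"
    have "cmp f x0 = cmp f' x0" using fun_cong[OF e, of x0] x0 by simp
    then show "f = f'" using epi[OF x0 f f'] by blast
  qed
  show "(\<lambda>f. \<lambda>x\<in>Hom A X. cmp f x) ` Hom X Y = gmaps Hom cmp idt A (Hom A X) (hact cmp) (Hom A Y) (hact cmp)"
  proof
    show "(\<lambda>f. \<lambda>x\<in>Hom A X. cmp f x) ` Hom X Y \<subseteq> gmaps Hom cmp idt A (Hom A X) (hact cmp) (Hom A Y) (hact cmp)"
      unfolding gmaps_def AutH hact_def
      using comp hact_tg[of X] unfolding tgset_def AutH hact_def by (auto simp: assoc)
  next
    show "gmaps Hom cmp idt A (Hom A X) (hact cmp) (Hom A Y) (hact cmp) \<subseteq> (\<lambda>f. \<lambda>x\<in>Hom A X. cmp f x) ` Hom X Y"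
    proof
      fix \<phi> assume "\<phi> \<in> gmaps Hom cmp idt A (Hom A X) (hact cmp) (Hom A Y) (hact cmp)"
      then have ext: "\<phi> \<in> extensional (Hom A X)" and pi: "\<phi> \<in> Hom A X \<rightarrow> Hom A Y"
        and eq: "\<And>g x. g \<in> Hom A A \<Longrightarrow> x \<in> Hom A X \<Longrightarrow> \<phi> (cmp x g) = cmp (\<phi> x) g"
        unfolding gmaps_def AutH hact_def by auto
      have y0: "\<phi> x0 \<in> Hom A Y" using pi x0 by blast
      have "\<exists>f\<in>Hom X Y. \<phi> x0 = cmp f x0"
      proof (rule factor[OF x0 y0])
        fix \<alpha> \<beta> assume "\<alpha> \<in> Hom A A" "\<beta> \<in> Hom A A" "cmp x0 \<alpha> = cmp x0 \<beta>"
        then show "cmp (\<phi> x0) \<alpha> = cmp (\<phi> x0) \<beta>" using eq x0 by metis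
      qed
      then obtain f where f: "f \<in> Hom X Y" "\<phi> x0 = cmp f x0" by blast
      have "\<phi> = (\<lambda>x\<in>Hom A X. cmp f x)"
      proof
        fix x show "\<phi> x = (\<lambda>x\<in>Hom A X. cmp f x) x"
        proof (cases "x \<in> Hom A X")
          case True
          then obtain g where g: "g \<in> Hom A A" "cmp x0 g = x" using trans_hom x0 by blast
          have "\<phi> x = cmp (cmp f x0) g" using eq[OF g(1) x0] g f by simp
          also have "\<dots> = cmp f x" using assoc[OF g(1) x0 f(1)] g by simp
          finally show ?thesis using True by simp
        next
          case False then show ?thesis using ext unfolding extensional_def by simp
        qed
      qed
      then show "\<phi> \<in> (\<lambda>f. \<lambda>x\<in>Hom A X. cmp f x) ` Hom X Y" using f by blast
    qed
  qed
qed


lemma unit_part: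
  assumes tg: "tgset Hom cmp idt A E act" and x0: "x0 \<in> E"
  shows "(\<exists>q Q. is_quotient Hom cmp A (Fix Hom cmp idt A act x0) q Q) \<and>
          (\<forall>q Q. is_quotient Hom cmp A (Fix Hom cmp idt A act x0) q Q \<longrightarrow>
             (\<exists>\<eta>. giso Hom cmp idt A E act (Hom A Q) (hact cmp) \<eta> \<and>
                 (\<forall>g \<in> Aut Hom cmp idt A. \<eta> (act g x0) = cmp q g) \<and>
                 (\<forall>X. bij_betw (\<lambda>k. \<lambda>e\<in>E. cmp k (\<eta> e)) (Hom Q X)
                        (gmaps Hom cmp idt A E act (Hom A X) (hact cmp)))))"
proof -
  note T = tg[unfolded tgset_def AutH]
  have cl: "\<And>g x. g \<in> Hom A A \<Longrightarrow> x \<in> E \<Longrightarrow> act g x \<in> E" using T by blast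
  have ai: "\<And>x. x \<in> E \<Longrightarrow> act (idt A) x = x" using T by blast
  have am: "\<And>g h x. g \<in> Hom A A \<Longrightarrow> h \<in> Hom A A \<Longrightarrow> x \<in> E \<Longrightarrow> act g (act h x) = act (cmp h g) x"
    using T by blast
  have tr: "\<And>x y. x \<in> E \<Longrightarrow> y \<in> E \<Longrightarrow> \<exists>g\<in>Hom A A. act g x = y" using T by blast
  define H where "H = Fix Hom cmp idt A act x0"
  have HA: "H = {g \<in> Hom A A. act g x0 = x0}" unfolding H_def Fix_def AutH ..
  have sub: "aut_subgroup Hom cmp idt A H"
    unfolding H_def by (rule fix_sub) (use x0 ai am in auto)
  obtain q1 Q1 where q1: "is_quotient Hom cmp A H q1 Q1"
    and rel1: "\<forall>f \<in> Hom A A. \<forall>g \<in> Hom A A. cmp q1 f = cmp q1 g \<longleftrightarrow> (\<exists>h\<in>H. f = cmp h g)"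
    using rc1 sub unfolding RC1_def by blast
  have q1d: "q1 \<in> Hom A Q1" "\<forall>h\<in>H. cmp q1 h = q1" using q1 unfolding is_quotient_def by blast+
  have part2: "\<exists>\<eta>. giso Hom cmp idt A E act (Hom A Q) (hact cmp) \<eta> \<and>
                 (\<forall>g \<in> Aut Hom cmp idt A. \<eta> (act g x0) = cmp q g) \<and>
                 (\<forall>X. bij_betw (\<lambda>k. \<lambda>e\<in>E. cmp k (\<eta> e)) (Hom Q X)
                        (gmaps Hom cmp idt A E act (Hom A X) (hact cmp)))"
    if qq: "is_quotient Hom cmp A H q Q" for q Q
  proof -
    have q: "q \<in> Hom A Q" and qi: "\<And>h. h \<in> H \<Longrightarrow> cmp q h = q"
      and qu: "\<And>Z g. g \<in> Hom A Z \<Longrightarrow> (\<forall>h\<in>H. cmp g h = g) \<Longrightarrow> \<exists>k\<in>Hom Q Z. g = cmp k q"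
      using qq unfolding is_quotient_def by blast+
    obtain k1 where k1: "k1 \<in> Hom Q Q1" "q1 = cmp k1 q" using qu[OF q1d(1)] q1d(2) by blast
    have wd: "cmp q g = cmp q g'" if g: "g \<in> Hom A A" and g': "g' \<in> Hom A A" and e: "act g x0 = act g' x0" for g g'
    proof -
      obtain g'' where g'': "g'' \<in> Hom A A" "cmp g'' g' = idt A" "cmp g' g'' = idt A" using inv[OF g'] by blast
      have gg: "cmp g g'' \<in> Hom A A" using comp g g'' by blast
      have "act (cmp g g'') x0 = act g'' (act g x0)" using am[OF g''(1) g x0] by simp
      also have "\<dots> = act (cmp g' g'') x0" using e am[OF g''(1) g' x0] by simp
      also have "\<dots> = x0" using g'' ai x0 by simp
      finally have "cmp g g'' \<in> H" using HA gg by blast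
      then have "cmp q (cmp g g'') = q" using qi by blast
      moreover have "cmp (cmp g g'') g' = g" using assoc[OF g' g''(1) g] g'' idr g by simp
      ultimately show ?thesis using assoc[OF g' gg q] by metis
    qed
    have wd2: "act g x0 = act g' x0" if g: "g \<in> Hom A A" and g': "g' \<in> Hom A A" and e: "cmp q g = cmp q g'" for g g'
    proof -
      have "cmp q1 g = cmp q1 g'" using k1 e assoc[OF g q k1(1)] assoc[OF g' q k1(1)] by simp
      then obtain h where h: "h \<in> H" "g = cmp h g'" using rel1 g g' by blast
      have hA: "h \<in> Hom A A" "act h x0 = x0" using h HA by auto
      show ?thesis using h am[OF g' hA(1) x0] hA by simp
    qed
    define \<eta> where "\<eta> = (\<lambda>e\<in>E. cmp q (SOME g. g \<in> Hom A A \<and> act g x0 = e))"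
    have eta: "\<eta> (act g x0) = cmp q g" if g: "g \<in> Hom A A" for g
    proof -
      have ex: "\<exists>g'. g' \<in> Hom A A \<and> act g' x0 = act g x0" using g by blast
      have "(SOME g'. g' \<in> Hom A A \<and> act g' x0 = act g x0) \<in> Hom A A \<and>
            act (SOME g'. g' \<in> Hom A A \<and> act g' x0 = act g x0) x0 = act g x0"
        by (rule someI_ex[OF ex])
      then have "cmp q (SOME g'. g' \<in> Hom A A \<and> act g' x0 = act g x0) = cmp q g"
        using wd g by blast
      then show ?thesis unfolding \<eta>_def using cl[OF g x0] by simp
    qed
    have Erep: "\<exists>g\<in>Hom A A. e = act g x0" if "e \<in> E" for e using tr[OF x0 that] by metis
    have eta0: "\<eta> x0 = q" using eta[OF idH[of A]] ai[OF x0] idr q by simp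
    have etaH: "\<eta> e \<in> Hom A Q" if eE: "e \<in> E" for e
    proof -
      obtain g where g: "g \<in> Hom A A" "e = act g x0" using Erep[OF eE] by blast
      show ?thesis using eta[OF g(1)] g(2) comp[OF g(1) q] by simp
    qed
    have giso: "giso Hom cmp idt A E act (Hom A Q) (hact cmp) \<eta>"
      unfolding giso_def gmaps_def AutH bij_betw_def
    proof (intro conjI CollectI ballI)
      show "\<eta> \<in> extensional E" unfolding \<eta>_def by simp
      show "\<eta> \<in> E \<rightarrow> Hom A Q" using etaH by blast
    next
      fix g x assume g: "g \<in> Hom A A" and x: "x \<in> E"
      obtain g' where g': "g' \<in> Hom A A" "x = act g' x0" using Erep[OF x] by blast
      have gg: "cmp g' g \<in> Hom A A" using comp[OF g g'(1)] .
      have "\<eta> (act g x) = \<eta> (act (cmp g' g) x0)" using am[OF g g'(1) x0] g'(2) by simp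
      also have "\<dots> = cmp q (cmp g' g)" using eta[OF gg] .
      also have "\<dots> = cmp (cmp q g') g" using assoc[OF g g'(1) q] .
      also have "\<dots> = hact cmp g (\<eta> x)" unfolding hact_def using eta[OF g'(1)] g'(2) by simp
      finally show "\<eta> (act g x) = hact cmp g (\<eta> x)" .
    next
      show "inj_on \<eta> E"
      proof (rule inj_onI)
        fix x y assume x: "x \<in> E" and y: "y \<in> E" and e: "\<eta> x = \<eta> y"
        obtain g where g: "g \<in> Hom A A" "x = act g x0" using Erep[OF x] by blast
        obtain g' where g': "g' \<in> Hom A A" "y = act g' x0" using Erep[OF y] by blast
        show "x = y" using wd2[OF g(1) g'(1)] e eta g g' by simp
      qed
    next
      show "\<eta> ` E = Hom A Q"
      proof
        show "\<eta> ` E \<subseteq> Hom A Q" using etaH by blast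
      next
        show "Hom A Q \<subseteq> \<eta> ` E"
        proof
          fix f assume f: "f \<in> Hom A Q"
          obtain g where g: "g \<in> Hom A A" "cmp q g = f" using trans_hom[OF q f] by blast
          then show "f \<in> \<eta> ` E" using eta cl x0 by (metis image_eqI)
        qed
      qed
    qed
    have adj: "bij_betw (\<lambda>k. \<lambda>e\<in>E. cmp k (\<eta> e)) (Hom Q X)
                        (gmaps Hom cmp idt A E act (Hom A X) (hact cmp))" for X
      unfolding bij_betw_def
    proof (intro conjI)
      show "inj_on (\<lambda>k. \<lambda>e\<in>E. cmp k (\<eta> e)) (Hom Q X)"
      proof (rule inj_onI)
        fix k k' assume k: "k \<in> Hom Q X" and k': "k' \<in> Hom Q X"
          and e: "(\<lambda>e\<in>E. cmp k (\<eta> e)) = (\<lambda>e\<in>E. cmp k' (\<eta> e))"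
        have "cmp k q = cmp k' q" using fun_cong[OF e, of x0] x0 eta0 by simp
        then show "k = k'" using epi[OF q k k'] by blast
      qed
      show "(\<lambda>k. \<lambda>e\<in>E. cmp k (\<eta> e)) ` Hom Q X = gmaps Hom cmp idt A E act (Hom A X) (hact cmp)"
      proof
        show "(\<lambda>k. \<lambda>e\<in>E. cmp k (\<eta> e)) ` Hom Q X \<subseteq> gmaps Hom cmp idt A E act (Hom A X) (hact cmp)"
        proof
          fix \<phi> assume "\<phi> \<in> (\<lambda>k. \<lambda>e\<in>E. cmp k (\<eta> e)) ` Hom Q X"
          then obtain k where k: "k \<in> Hom Q X" "\<phi> = (\<lambda>e\<in>E. cmp k (\<eta> e))" by blast
          have eqv: "\<eta> (act g x) = hact cmp g (\<eta> x)" if "g \<in> Hom A A" "x \<in> E" for g x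
            using giso that unfolding giso_def gmaps_def AutH by blast
          show "\<phi> \<in> gmaps Hom cmp idt A E act (Hom A X) (hact cmp)"
            unfolding gmaps_def AutH
          proof (intro CollectI conjI ballI)
            show "\<phi> \<in> extensional E" using k by simp
            show "\<phi> \<in> E \<rightarrow> Hom A X" using k etaH comp[OF etaH k(1)] by auto
          next
            fix g x assume g: "g \<in> Hom A A" and x: "x \<in> E"
            show "\<phi> (act g x) = hact cmp g (\<phi> x)"
              using k cl[OF g x] x eqv[OF g x] assoc[OF g etaH[OF x] k(1)] unfolding hact_def by simp
          qed
        qed
      next
        show "gmaps Hom cmp idt A E act (Hom A X) (hact cmp) \<subseteq> (\<lambda>k. \<lambda>e\<in>E. cmp k (\<eta> e)) ` Hom Q X"
        proof
          fix \<phi> assume "\<phi> \<in> gmaps Hom cmp idt A E act (Hom A X) (hact cmp)"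
          then have ext: "\<phi> \<in> extensional E" and pi: "\<phi> \<in> E \<rightarrow> Hom A X"
            and eq: "\<And>g x. g \<in> Hom A A \<Longrightarrow> x \<in> E \<Longrightarrow> \<phi> (act g x) = cmp (\<phi> x) g"
            unfolding gmaps_def AutH hact_def by auto
          have y: "\<phi> x0 \<in> Hom A X" using pi x0 by blast
          have "\<forall>h\<in>H. cmp (\<phi> x0) h = \<phi> x0"
          proof
            fix h assume "h \<in> H" then have "h \<in> Hom A A" "act h x0 = x0" using HA by auto
            then show "cmp (\<phi> x0) h = \<phi> x0" using eq x0 by metis
          qed
          then obtain k where k: "k \<in> Hom Q X" "\<phi> x0 = cmp k q" using qu[OF y] by blast
          have "\<phi> = (\<lambda>e\<in>E. cmp k (\<eta> e))"
          proof
            fix e show "\<phi> e = (\<lambda>e\<in>E. cmp k (\<eta> e)) e"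
            proof (cases "e \<in> E")
              case True
              obtain g where g: "g \<in> Hom A A" "e = act g x0" using Erep[OF True] by blast
              have "\<phi> e = cmp (cmp k q) g" using eq[OF g(1) x0] g k by simp
              also have "\<dots> = cmp k (\<eta> e)" using assoc[OF g(1) q k(1)] g eta by simp
              finally show ?thesis using True by simp
            next
              case False then show ?thesis using ext unfolding extensional_def by simp
            qed
          qed
          then show "\<phi> \<in> (\<lambda>k. \<lambda>e\<in>E. cmp k (\<eta> e)) ` Hom Q X" using k by blast
        qed
      qed
    qed
    show ?thesis using giso adj eta unfolding AutH by blast
  qed
  show ?thesis using part2 q1 unfolding H_def by blast
qed

end

theorem theorem2p11:
  fixes Hom :: "'o \<Rightarrow> 'o \<Rightarrow> 'a set" and cmp :: "'a \<Rightarrow> 'a \<Rightarrow> 'a" and idt :: "'o \<Rightarrow> 'a"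
    and A :: 'o
  assumes cat: "category Hom cmp idt"
    and rc0: "RC0 Hom cmp A"
    and rc1: "RC1 Hom cmp idt A"
    and rc2: "RC2 Hom cmp idt A"
  shows
    \<comment> \<open>[A,X] with g \<cdot> x = x \<circ> g is a transitive G-set\<close>
    "(\<forall>X. tgset Hom cmp idt A (Hom A X) (hact cmp))
     \<comment> \<open>[A,-]_G on arrows, and it is fully faithful\<close>
     \<and> (\<forall>X Y. bij_betw (\<lambda>f. \<lambda>x\<in>Hom A X. cmp f x) (Hom X Y)
                 (gmaps Hom cmp idt A (Hom A X) (hact cmp) (Hom A Y) (hact cmp)))
     \<comment> \<open>left adjoint A \<times>_G E = A/Fix(x0): unit E \<rightarrow> [A,A/H] is an iso, with the adjunction bijection\<close>
     \<and> (\<forall>(E :: 'e set) act x0. tgset Hom cmp idt A E act \<longrightarrow> x0 \<in> E \<longrightarrow>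
          (\<exists>q Q. is_quotient Hom cmp A (Fix Hom cmp idt A act x0) q Q) \<and>
          (\<forall>q Q. is_quotient Hom cmp A (Fix Hom cmp idt A act x0) q Q \<longrightarrow>
             (\<exists>\<eta>. giso Hom cmp idt A E act (Hom A Q) (hact cmp) \<eta> \<and>
                 (\<forall>g \<in> Aut Hom cmp idt A. \<eta> (act g x0) = cmp q g) \<and>
                 (\<forall>X. bij_betw (\<lambda>k. \<lambda>e\<in>E. cmp k (\<eta> e)) (Hom Q X)
                        (gmaps Hom cmp idt A E act (Hom A X) (hact cmp))))))
     \<comment> \<open>counit A/Fix(x) \<rightarrow> X is an isomorphism\<close>
     \<and> (\<forall>X x. x \<in> Hom A X \<longrightarrow>
          (\<forall>q Q. is_quotient Hom cmp A (Fix Hom cmp idt A (hact cmp) x) q Q \<longrightarrow>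
             (\<exists>k. is_iso Hom cmp idt Q X k \<and> cmp k q = x)))"
proof -
  interpret rcl Hom cmp idt A using assms by (unfold_locales)
  show ?thesis
  proof (intro conjI allI impI)
    fix X show "tgset Hom cmp idt A (Hom A X) (hact cmp)" by (rule hact_tg)
  next
    fix X Y show "bij_betw (\<lambda>f. \<lambda>x\<in>Hom A X. cmp f x) (Hom X Y)
                 (gmaps Hom cmp idt A (Hom A X) (hact cmp) (Hom A Y) (hact cmp))" by (rule ff)
  next
    fix E :: "'e set" and act x0 assume "tgset Hom cmp idt A E act" "x0 \<in> E"
    note u = unit_part[OF this]
    show "\<exists>q Q. is_quotient Hom cmp A (Fix Hom cmp idt A act x0) q Q" using u by (rule conjunct1)
    fix q Q assume "is_quotient Hom cmp A (Fix Hom cmp idt A act x0) q Q"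
    then show "\<exists>\<eta>. giso Hom cmp idt A E act (Hom A Q) (hact cmp) \<eta> \<and>
                 (\<forall>g \<in> Aut Hom cmp idt A. \<eta> (act g x0) = cmp q g) \<and>
                 (\<forall>X. bij_betw (\<lambda>k. \<lambda>e\<in>E. cmp k (\<eta> e)) (Hom Q X)
                        (gmaps Hom cmp idt A E act (Hom A X) (hact cmp)))"
      using conjunct2[OF u] by blast
  next
    fix X x q Q assume "x \<in> Hom A X" "is_quotient Hom cmp A (Fix Hom cmp idt A (hact cmp) x) q Q"
    then show "\<exists>k. is_iso Hom cmp idt Q X k \<and> cmp k q = x" by (rule counit)
  qed
qed

end
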